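(* Let $f,g,h$ be smooth real functions of one variable with $f\neq 0$, $g\neq 0$, $g'\neq 0$. Then the equation $$u_t-f(u)u_x-g(u)u_{xx}+h(u)u_x^2=0$$ is strictly self-adjoint if and only if $$h(u)=-\frac{g(u)}{u}-g'(u).$$
   Context: For a differential equation $\mathfrak{F}[u]=0$ in independent variables $t,x$ and dependent variable $u$, introduce a new dependent variable $\nu=\nu(t,x)$. The formal Lagrangian is $\mathfrak{L}=\nu\mathfrak{F}$ and the adjoint is $\mathfrak{F}^*=\frac{\delta\mathfrak{L}}{\delta u}$, where $\frac{\delta}{\delta u}=\frac{\partial}{\partial u}-D_t\frac{\partial}{\partial u_t}-D_x\frac{\partial}{\partial u_x}+D_x^2\frac{\partial}{\partial u_{xx}}$ and $D_t,D_x$ are total derivatives. The equation is strictly self-adjoint if $\mathfrak{F}^*|_{\nu=u}=\lambda\mathfrak{F}$ for some coefficient $\lambda=\lambda(t,x,u,\dots)$ (with derivatives of $\nu$ replaced by the corresponding derivatives of $u$). *)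

theory Defs
  imports "HOL-Analysis.Analysis"
begin

definition smooth_fun :: "(real \<Rightarrow> real) \<Rightarrow> bool" where
  "smooth_fun f \<longleftrightarrow> (\<forall>n. \<forall>y. ((deriv ^^ n) f) differentiable (at y))"

definition pt :: "(real \<Rightarrow> real \<Rightarrow> real) \<Rightarrow> real \<Rightarrow> real \<Rightarrow> real" where
  "pt U t x = deriv (\<lambda>s. U s x) t"

definition px :: "(real \<Rightarrow> real \<Rightarrow> real) \<Rightarrow> real \<Rightarrow> real \<Rightarrow> real" where
  "px U t x = deriv (\<lambda>y. U t y) x"

definition mixpd :: "nat \<Rightarrow> nat \<Rightarrow> (real \<Rightarrow> real \<Rightarrow> real) \<Rightarrow> real \<Rightarrow> real \<Rightarrow> real" where
  "mixpd i j U t x = (deriv ^^ i) (\<lambda>s. (deriv ^^ j) (\<lambda>y. U s y) x) t"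

definition smooth2 :: "(real \<Rightarrow> real \<Rightarrow> real) \<Rightarrow> bool" where
  "smooth2 U \<longleftrightarrow> (\<forall>i j.
      continuous_on UNIV (\<lambda>p. mixpd i j U (fst p) (snd p)) \<and>
      (\<forall>t x. (\<lambda>s. mixpd i j U s x) differentiable (at t)) \<and>
      (\<forall>t x. (\<lambda>y. mixpd i j U t y) differentiable (at x)) \<and>
      (\<forall>t x. (\<lambda>y. (deriv ^^ j) (\<lambda>y. U t y) y) differentiable (at x)))"

definition jet :: "(real \<Rightarrow> real \<Rightarrow> real) \<Rightarrow> real \<Rightarrow> real \<Rightarrow> nat \<Rightarrow> nat \<Rightarrow> real" where
  "jet U t x = (\<lambda>i j. mixpd i j U t x)"

text \<open>A second-order differential function F(t,x,u,u_t,u_x,u_xx) and Lagrangians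
L(t,x,u,u_t,u_x,u_xx,nu) (depending also on the new dependent variable nu).\<close>
type_synonym dfun = "real \<Rightarrow> real \<Rightarrow> real \<Rightarrow> real \<Rightarrow> real \<Rightarrow> real \<Rightarrow> real"
type_synonym lagr = "real \<Rightarrow> real \<Rightarrow> real \<Rightarrow> real \<Rightarrow> real \<Rightarrow> real \<Rightarrow> real \<Rightarrow> real"

definition formal_lagrangian :: "dfun \<Rightarrow> lagr" where
  "formal_lagrangian F = (\<lambda>t x u ut ux uxx nu. nu * F t x u ut ux uxx)"

definition L_u :: "lagr \<Rightarrow> (real \<Rightarrow> real \<Rightarrow> real) \<Rightarrow> (real \<Rightarrow> real \<Rightarrow> real) \<Rightarrow> real \<Rightarrow> real \<Rightarrow> real" where
  "L_u L U N t x = deriv (\<lambda>v. L t x v (pt U t x) (px U t x) (px (px U) t x) (N t x)) (U t x)"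

definition L_ut :: "lagr \<Rightarrow> (real \<Rightarrow> real \<Rightarrow> real) \<Rightarrow> (real \<Rightarrow> real \<Rightarrow> real) \<Rightarrow> real \<Rightarrow> real \<Rightarrow> real" where
  "L_ut L U N t x = deriv (\<lambda>v. L t x (U t x) v (px U t x) (px (px U) t x) (N t x)) (pt U t x)"

definition L_ux :: "lagr \<Rightarrow> (real \<Rightarrow> real \<Rightarrow> real) \<Rightarrow> (real \<Rightarrow> real \<Rightarrow> real) \<Rightarrow> real \<Rightarrow> real \<Rightarrow> real" where
  "L_ux L U N t x = deriv (\<lambda>v. L t x (U t x) (pt U t x) v (px (px U) t x) (N t x)) (px U t x)"

definition L_uxx :: "lagr \<Rightarrow> (real \<Rightarrow> real \<Rightarrow> real) \<Rightarrow> (real \<Rightarrow> real \<Rightarrow> real) \<Rightarrow> real \<Rightarrow> real \<Rightarrow> real" where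
  "L_uxx L U N t x = deriv (\<lambda>v. L t x (U t x) (pt U t x) (px U t x) v (N t x)) (px (px U) t x)"

text \<open>Variational derivative delta L / delta u, with total derivatives realised as
partial derivatives along (U, N).\<close>
definition var_deriv :: "lagr \<Rightarrow> (real \<Rightarrow> real \<Rightarrow> real) \<Rightarrow> (real \<Rightarrow> real \<Rightarrow> real) \<Rightarrow> real \<Rightarrow> real \<Rightarrow> real" where
  "var_deriv L U N t x =
     L_u L U N t x - pt (L_ut L U N) t x - px (L_ux L U N) t x + px (px (L_uxx L U N)) t x"

definition adjoint :: "dfun \<Rightarrow> (real \<Rightarrow> real \<Rightarrow> real) \<Rightarrow> (real \<Rightarrow> real \<Rightarrow> real) \<Rightarrow> real \<Rightarrow> real \<Rightarrow> real" where
  "adjoint F U N = var_deriv (formal_lagrangian F) U N"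

text \<open>Strict self-adjointness: F*|_{nu=u} = lambda F with a coefficient lambda
depending on t, x and (any of) the derivatives of u.\<close>
definition strictly_self_adjoint :: "dfun \<Rightarrow> bool" where
  "strictly_self_adjoint F \<longleftrightarrow>
     (\<exists>lam :: real \<Rightarrow> real \<Rightarrow> (nat \<Rightarrow> nat \<Rightarrow> real) \<Rightarrow> real.
        \<forall>U. smooth2 U \<longrightarrow>
          (\<forall>t x. adjoint F U U t x =
                  lam t x (jet U t x) * F t x (U t x) (pt U t x) (px U t x) (px (px U) t x)))"

definition eqF :: "(real \<Rightarrow> real) \<Rightarrow> (real \<Rightarrow> real) \<Rightarrow> (real \<Rightarrow> real) \<Rightarrow> dfun" where
  "eqF f g h = (\<lambda>t x u ut ux uxx. ut - f u * ux - g u * uxx + h u * ux ^ 2)"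

end

theory Submission
  imports Defs
begin

lemma deriv_of:
  "(F has_real_derivative D) (at x) \<Longrightarrow> deriv F x = D"
  by (rule DERIV_imp_deriv)

lemma adjoint_formula:
  fixes f g h :: "real \<Rightarrow> real" and U :: "real \<Rightarrow> real \<Rightarrow> real"
  assumes df: "\<And>y. f differentiable (at y)"
    and dg: "\<And>y. g differentiable (at y)"
    and dh: "\<And>y. h differentiable (at y)"
    and ddg: "\<And>y. deriv g differentiable (at y)"
    and dU: "\<And>y. (\<lambda>y. U t y) differentiable (at y)"
    and dUx: "\<And>y. (\<lambda>y. px U t y) differentiable (at y)"
  shows "adjoint (eqF f g h) U U t x =
     - pt U t x + f (U t x) * px U t x
     + (- 2 * U t x * deriv g (U t x) - 2 * U t x * h (U t x) - g (U t x)) * px (px U) t x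
     + (- U t x * deriv h (U t x) - 2 * h (U t x) - 2 * deriv g (U t x)
        - U t x * deriv (deriv g) (U t x)) * (px U t x)^2"
proof -
  have Df: "(f has_real_derivative deriv f y) (at y)" for y
    using df DERIV_deriv_iff_real_differentiable by blast
  have Dg: "(g has_real_derivative deriv g y) (at y)" for y
    using dg DERIV_deriv_iff_real_differentiable by blast
  have Dh: "(h has_real_derivative deriv h y) (at y)" for y
    using dh DERIV_deriv_iff_real_differentiable by blast
  have Dg': "(deriv g has_real_derivative deriv (deriv g) y) (at y)" for y
    using ddg DERIV_deriv_iff_real_differentiable by blast
  have DU: "((\<lambda>y. U t y) has_real_derivative px U t y) (at y)" for y
    using dU[of y] unfolding px_def using DERIV_deriv_iff_real_differentiable by blast
  have DUx: "((\<lambda>y. px U t y) has_real_derivative px (px U) t y) (at y)" for y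
    using dUx[of y] unfolding px_def[of "px U"] using DERIV_deriv_iff_real_differentiable by blast
  let ?L = "formal_lagrangian (eqF f g h)"
  have Lu: "L_u ?L U U s y = U s y * (- deriv f (U s y) * px U s y - deriv g (U s y) * px (px U) s y
            + deriv h (U s y) * (px U s y)^2)" for s y
    unfolding L_u_def formal_lagrangian_def eqF_def
    by (rule deriv_of) (auto intro!: derivative_eq_intros Df Dg Dh)
  have Lut: "L_ut ?L U U = U"
    unfolding L_ut_def formal_lagrangian_def eqF_def
    by (intro ext deriv_of) (auto intro!: derivative_eq_intros)
  have Lux: "L_ux ?L U U s y = U s y * (- f (U s y) + 2 * h (U s y) * px U s y)" for s y
    unfolding L_ux_def formal_lagrangian_def eqF_def
    by (rule deriv_of) (auto intro!: derivative_eq_intros simp: algebra_simps)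
  have Luxx: "L_uxx ?L U U s y = - U s y * g (U s y)" for s y
    unfolding L_uxx_def formal_lagrangian_def eqF_def
    by (rule deriv_of) (auto intro!: derivative_eq_intros)
  have P1: "px (L_ux ?L U U) t x = px U t x * (- f (U t x) + 2 * h (U t x) * px U t x)
     + U t x * (- deriv f (U t x) * px U t x + 2 * (deriv h (U t x) * px U t x * px U t x
        + h (U t x) * px (px U) t x))"
    unfolding px_def[of "L_ux ?L U U"] Lux
    by (rule deriv_of) (auto intro!: derivative_eq_intros DU DUx
        DERIV_chain2[OF Df DU] DERIV_chain2[OF Dh DU])
  have P2a: "px (L_uxx ?L U U) t y = - (px U t y * g (U t y) + U t y * (deriv g (U t y) * px U t y))" for y
    unfolding px_def[of "L_uxx ?L U U"] Luxx
    by (rule deriv_of) (auto intro!: derivative_eq_intros DU DERIV_chain2[OF Dg DU])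
  have P2: "px (px (L_uxx ?L U U)) t x = - (px (px U) t x * g (U t x) + px U t x * (deriv g (U t x) * px U t x)
      + (px U t x * (deriv g (U t x) * px U t x) + U t x * (deriv (deriv g) (U t x) * px U t x * px U t x
      + deriv g (U t x) * px (px U) t x)))"
    unfolding px_def[of "px (L_uxx ?L U U)"] P2a
    by (rule deriv_of) (auto intro!: derivative_eq_intros DU DUx
        DERIV_chain2[OF Dg DU] DERIV_chain2[OF Dg' DU])
  show ?thesis
    unfolding adjoint_def var_deriv_def Lu Lut P1 P2
    by (simp add: algebra_simps power2_eq_square)
qed


lemma Dy_pow:
  "(deriv ^^ j) (\<lambda>y::real. b + y^2/2) =
   (\<lambda>y. if j = 0 then b + y^2/2 else if j = 1 then y else if j = 2 then 1 else 0)"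
proof (induction j)
  case 0
  then show ?case by simp
next
  case (Suc j)
  have e: "(deriv ^^ Suc j) (\<lambda>y::real. b + y^2/2) = deriv ((deriv ^^ j) (\<lambda>y::real. b + y^2/2))"
    by simp
  show ?case
  proof (cases "j = 0")
    case True
    have "(deriv ^^ j) (\<lambda>y::real. b + y^2/2) = (\<lambda>y. b + y^2/2)" using Suc True by simp
    moreover have "deriv (\<lambda>y::real. b + y^2/2) = (\<lambda>y. y)"
    proof
      fix y :: real
      show "deriv (\<lambda>y::real. b + y^2/2) y = y"
        by (rule deriv_of) (auto intro!: derivative_eq_intros)
    qed
    ultimately show ?thesis unfolding e using True by simp
  next
    case j0: False
    show ?thesis
    proof (cases "j = 1")
      case True
      have "(deriv ^^ j) (\<lambda>y::real. b + y^2/2) = (\<lambda>y. y)" using Suc True by simp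
      moreover have "deriv (\<lambda>y::real. y) = (\<lambda>y. 1)"
        by (rule ext, rule deriv_of) (auto intro!: derivative_eq_intros)
      ultimately show ?thesis unfolding e using True by simp
    next
      case j1: False
      have "(deriv ^^ j) (\<lambda>y::real. b + y^2/2) = (\<lambda>y. if j = 2 then 1 else 0)"
        using Suc j0 j1 by simp
      moreover have "deriv (\<lambda>y::real. c) = (\<lambda>y. 0)" for c
        by (rule ext, rule deriv_of) (auto intro!: derivative_eq_intros)
      ultimately show ?thesis unfolding e using j0 j1 by simp
    qed
  qed
qed

lemma Ds_pow:
  "(deriv ^^ i) (\<lambda>s::real. p + q * s) =
   (\<lambda>s. if i = 0 then p + q * s else if i = 1 then q else 0)"
proof (induction i)
  case 0
  then show ?case by simp
next
  case (Suc i)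
  have e: "(deriv ^^ Suc i) (\<lambda>s::real. p + q * s) = deriv ((deriv ^^ i) (\<lambda>s::real. p + q * s))"
    by simp
  have c: "deriv (\<lambda>y::real. c) = (\<lambda>y. 0)" for c
    by (rule ext, rule deriv_of) (auto intro!: derivative_eq_intros)
  show ?case
  proof (cases "i = 0")
    case True
    have "(deriv ^^ i) (\<lambda>s::real. p + q * s) = (\<lambda>s. p + q * s)" using Suc True by simp
    moreover have "deriv (\<lambda>s::real. p + q * s) = (\<lambda>s. q)"
      by (rule ext, rule deriv_of) (auto intro!: derivative_eq_intros)
    ultimately show ?thesis unfolding e using True by simp
  next
    case False
    have "(deriv ^^ i) (\<lambda>s::real. p + q * s) = (\<lambda>s. if i = 1 then q else 0)"
      using Suc False by simp
    then show ?thesis unfolding e using False c by simp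
  qed
qed

definition testU :: "real \<Rightarrow> real \<Rightarrow> real \<Rightarrow> real \<Rightarrow> real" where
  "testU a k = (\<lambda>s y. a + k * s + y^2/2)"

lemma testU_mixpd:
  "mixpd i j (testU a k) s y =
    (if i = 0 then (if j = 0 then a + y^2/2 else if j = 1 then y else if j = 2 then 1 else 0)
                   + (if j = 0 then k else 0) * s
     else if i = 1 then (if j = 0 then k else 0) else 0)"
proof -
  have eq: "(\<lambda>s. (deriv ^^ j) (\<lambda>y. testU a k s y) y) =
     (\<lambda>s. (if j = 0 then a + y^2/2 else if j = 1 then y else if j = 2 then 1 else 0)
                   + (if j = 0 then k else 0) * s)"
  proof
    fix s
    show "(deriv ^^ j) (\<lambda>y. testU a k s y) y =
     (if j = 0 then a + y^2/2 else if j = 1 then y else if j = 2 then 1 else 0)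
                   + (if j = 0 then k else 0) * s"
      unfolding testU_def using Dy_pow[of j "a + k * s"] by simp
  qed
  show ?thesis unfolding mixpd_def eq Ds_pow by simp
qed

lemma testU_smooth2: "smooth2 (testU a k)"
proof -
  have A: "continuous_on UNIV (\<lambda>p. mixpd i j (testU a k) (fst p) (snd p))" for i j
    unfolding testU_mixpd
    by (cases "i = 0"; cases "i = 1"; cases "j = 0"; cases "j = 1"; cases "j = 2";
        simp; auto intro!: continuous_intros)
  have B: "(\<lambda>s. mixpd i j (testU a k) s x) differentiable (at t)" for i j t x
    unfolding testU_mixpd
    by (cases "i = 0"; cases "i = 1"; cases "j = 0"; cases "j = 1"; cases "j = 2";
        auto intro!: derivative_intros)
  have C: "(\<lambda>y. mixpd i j (testU a k) t y) differentiable (at x)" for i j t x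
    unfolding testU_mixpd
    by (cases "i = 0"; cases "i = 1"; cases "j = 0"; cases "j = 1"; cases "j = 2";
        auto intro!: derivative_intros)
  have D: "(\<lambda>y. (deriv ^^ j) (\<lambda>y. testU a k t y) y) differentiable (at x)" for j t x
    unfolding testU_def Dy_pow[of j "a + k * t"]
    by (cases "j = 0"; cases "j = 1"; cases "j = 2"; auto intro!: derivative_intros)
  show ?thesis unfolding smooth2_def using A B C D by blast
qed


lemma smooth_fun_D0: "smooth_fun f \<Longrightarrow> f differentiable (at y)"
  unfolding smooth_fun_def by (metis funpow_0)

lemma smooth_fun_D1: "smooth_fun f \<Longrightarrow> deriv f differentiable (at y)"
  unfolding smooth_fun_def by (metis One_nat_def funpow_0 funpow_Suc_right o_apply)

theorem corollary2:
  fixes f g h :: "real \<Rightarrow> real"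
  assumes "smooth_fun f" and "smooth_fun g" and "smooth_fun h"
    and "f \<noteq> (\<lambda>_. 0)" and "g \<noteq> (\<lambda>_. 0)" and "deriv g \<noteq> (\<lambda>_. 0)"
  shows "strictly_self_adjoint (eqF f g h) \<longleftrightarrow>
         (\<forall>u. u \<noteq> 0 \<longrightarrow> h u = - g u / u - deriv g u)"
proof -
  have df: "\<And>y. f differentiable (at y)" using assms(1) smooth_fun_D0 by blast
  have dg: "\<And>y. g differentiable (at y)" using assms(2) smooth_fun_D0 by blast
  have dh: "\<And>y. h differentiable (at y)" using assms(3) smooth_fun_D0 by blast
  have ddg: "\<And>y. deriv g differentiable (at y)" using assms(2) smooth_fun_D1 by blast
  have Dg: "(g has_real_derivative deriv g y) (at y)" for y
    using dg DERIV_deriv_iff_real_differentiable by blast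
  have Dh: "(h has_real_derivative deriv h y) (at y)" for y
    using dh DERIV_deriv_iff_real_differentiable by blast
  have Dg': "(deriv g has_real_derivative deriv (deriv g) y) (at y)" for y
    using ddg DERIV_deriv_iff_real_differentiable by blast
  show ?thesis
  proof
    assume "strictly_self_adjoint (eqF f g h)"
    then obtain lam :: "real \<Rightarrow> real \<Rightarrow> (nat \<Rightarrow> nat \<Rightarrow> real) \<Rightarrow> real" where
      L: "\<And>U t x. smooth2 U \<Longrightarrow> adjoint (eqF f g h) U U t x =
                  lam t x (jet U t x) * eqF f g h t x (U t x) (pt U t x) (px U t x) (px (px U) t x)"
      unfolding strictly_self_adjoint_def by blast
    show "\<forall>u. u \<noteq> 0 \<longrightarrow> h u = - g u / u - deriv g u"
    proof (intro allI impI)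
      fix a :: real assume a0: "a \<noteq> 0"
      define U where "U = testU a (g a)"
      have sU: "smooth2 U" unfolding U_def by (rule testU_smooth2)
      have U00: "U 0 0 = a" unfolding U_def testU_def by simp
      have pxU: "px U 0 = (\<lambda>y. y)"
        unfolding px_def U_def testU_def
        by (rule ext, rule deriv_of) (auto intro!: derivative_eq_intros)
      have pxU0: "px U 0 0 = 0" using pxU by simp
      have pxxU: "px (px U) 0 0 = 1"
        unfolding px_def[of "px U"] pxU
        by (rule deriv_of) (auto intro!: derivative_eq_intros)
      have ptU: "pt U 0 0 = g a"
        unfolding pt_def U_def testU_def
        by (rule deriv_of) (auto intro!: derivative_eq_intros)
      have dU: "\<And>y. (\<lambda>y. U 0 y) differentiable (at y)"
        unfolding U_def testU_def by (auto intro!: derivative_intros)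
      have dUx: "\<And>y. (\<lambda>y. px U 0 y) differentiable (at y)"
        unfolding pxU by (auto intro!: derivative_intros)
      have F0: "eqF f g h 0 0 (U 0 0) (pt U 0 0) (px U 0 0) (px (px U) 0 0) = 0"
        unfolding eqF_def U00 pxU0 pxxU ptU by simp
      have "adjoint (eqF f g h) U U 0 0 = 0" using L[OF sU, of 0 0] F0 by simp
      then have "- g a + (- 2 * a * deriv g a - 2 * a * h a - g a) = 0"
        using adjoint_formula[OF df dg dh ddg dU dUx, of 0] U00 pxU0 pxxU ptU by simp
      then have "a * h a = - g a - a * deriv g a" by simp
      then show "h a = - g a / a - deriv g a" using a0 by (simp add: field_simps)
    qed
  next
    assume H: "\<forall>u. u \<noteq> 0 \<longrightarrow> h u = - g u / u - deriv g u"
    define phi where "phi = (\<lambda>u. u * h u + g u + u * deriv g u)"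
    have phi_nz: "phi u = 0" if "u \<noteq> 0" for u
      using H that unfolding phi_def by (simp add: field_simps)
    have Dphi: "(phi has_real_derivative
        (h u + u * deriv h u + deriv g u + (deriv g u + u * deriv (deriv g) u))) (at u)" for u
      unfolding phi_def
      by (auto intro!: derivative_eq_intros Dg Dh Dg' simp: algebra_simps)
    have "isCont phi 0" using Dphi DERIV_isCont by blast
    then have T1: "(phi \<longlongrightarrow> phi 0) (at 0)" by (simp add: isCont_def)
    have "\<forall>\<^sub>F u in at 0. phi u = 0"
      by (auto simp: eventually_at_filter phi_nz)
    then have T2: "(phi \<longlongrightarrow> 0) (at 0)" by (rule tendsto_eventually)
    have "phi 0 = 0" using LIM_unique[OF T1 T2] .
    then have phi0: "phi = (\<lambda>_. 0)" using phi_nz by (metis ext)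
    have phid: "h u + u * deriv h u + deriv g u + (deriv g u + u * deriv (deriv g) u) = 0" for u
      using Dphi[of u] unfolding phi0 using DERIV_unique DERIV_const by blast
    have phiu: "u * h u + g u + u * deriv g u = 0" for u
      using phi0 unfolding phi_def by metis
    show "strictly_self_adjoint (eqF f g h)"
      unfolding strictly_self_adjoint_def
    proof (intro exI[of _ "\<lambda>_ _ _. -1"] allI impI)
      fix U :: "real \<Rightarrow> real \<Rightarrow> real" and t x :: real
      assume sU: "smooth2 U"
      have dU: "\<And>y. (\<lambda>y. U t y) differentiable (at y)"
        using sU unfolding smooth2_def mixpd_def by (metis funpow_0)
      have dUx: "\<And>y. (\<lambda>y. px U t y) differentiable (at y)"
      proof -
        fix y
        have "(\<lambda>y. mixpd 0 1 U t y) differentiable (at y)"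
          using sU unfolding smooth2_def by blast
        then show "(\<lambda>y. px U t y) differentiable (at y)"
          by (simp add: mixpd_def px_def)
      qed
      let ?u = "U t x"
      have e1: "- 2 * ?u * deriv g ?u - 2 * ?u * h ?u - g ?u = g ?u"
        using phiu[of ?u] by (simp add: algebra_simps)
      have e2: "- ?u * deriv h ?u - 2 * h ?u - 2 * deriv g ?u - ?u * deriv (deriv g) ?u = - h ?u"
        using phid[of ?u] by (simp add: algebra_simps)
      show "adjoint (eqF f g h) U U t x =
          -1 * eqF f g h t x (U t x) (pt U t x) (px U t x) (px (px U) t x)"
        unfolding adjoint_formula[OF df dg dh ddg dU dUx] e1 e2
        by (simp add: eqF_def algebra_simps)
    qed
  qed
qed

end
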